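(* Let $(t_n(x))_{n\ge0}$ be the generalized Gončarov basis associated with $(\mathfrak d,\mathcal Z)$, $\mathcal Z=(z_i)_{i\ge0}$, and let $(p_n(x))_{n\ge0}$ be the basic sequence of $\mathfrak d$. Then for $n\ge1$, $$t_n(0)=\sum_{\rho\in\mathcal R[n]}(-1)^{|\rho|}\prod_{i=0}^{|\rho|-1}p_{b_{i+1}}(z_{s_i})=\sum_{\rho\in\mathcal R[n]}(-1)^{|\rho|}p_{b_1}(z_0)\,p_{b_2}(z_{s_1})\cdots p_{b_k}(z_{s_{k-1}}),$$ where for $\rho=(B_1,\dots,B_k)$ we write $k=|\rho|$, $b_i=|B_i|$, and $s_i=b_1+\cdots+b_i$ (with $s_0=0$).
   Context: $\mathbb K$ is a field of characteristic zero; a delta operator is a linear operator $\mathfrak d$ on $\mathbb K[x]$ commuting with all shifts $E_a:f(x)\mapsto f(x+a)$ and with $\mathfrak d(x)$ a nonzero constant; its basic sequence is the unique $(p_n)$ with $\deg p_n=n$, $p_0=1$, $p_n(0)=0$ ($n\ge1$), $\mathfrak dp_n=np_{n-1}$. $\varepsilon_z$ is evaluation at $z$. The generalized Gončarov basis associated with $(\mathfrak d,\mathcal Z)$ is the unique sequence $(t_n)_{n\ge0}$ with $\deg t_n=n$ and $\varepsilon_{z_i}(\mathfrak d^{\,i}(t_n))=n!\,\delta_{i,n}$ for all $i,n$. $\mathcal R[n]$ is the set of ordered partitions of $[n]=\{1,\dots,n\}$, i.e. ordered lists $(B_1,\dots,B_k)$ of pairwise disjoint nonempty subsets with union $[n]$.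 *)

theory Defs
  imports "HOL-Computational_Algebra.Polynomial"
begin

definition shift_op :: "'a::comm_ring_1 \<Rightarrow> 'a poly \<Rightarrow> 'a poly" where
  "shift_op a f = f \<circ>\<^sub>p [:a, 1:]"

definition delta_operator :: "('a::field_char_0 poly \<Rightarrow> 'a poly) \<Rightarrow> bool" where
  "delta_operator d \<longleftrightarrow>
     (\<forall>f g. d (f + g) = d f + d g) \<and>
     (\<forall>c f. d (smult c f) = smult c (d f)) \<and>
     (\<forall>a f. d (shift_op a f) = shift_op a (d f)) \<and>
     (\<exists>c. c \<noteq> 0 \<and> d [:0, 1:] = [:c:])"

definition basic_sequence :: "('a::field_char_0 poly \<Rightarrow> 'a poly) \<Rightarrow> (nat \<Rightarrow> 'a poly) \<Rightarrow> bool" where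
  "basic_sequence d p \<longleftrightarrow>
     (\<forall>n. degree (p n) = n) \<and> p 0 = 1 \<and>
     (\<forall>n\<ge>1. poly (p n) 0 = 0) \<and>
     d (p 0) = 0 \<and>
     (\<forall>n. d (p (Suc n)) = smult (of_nat (Suc n)) (p n))"

definition goncarov_basis ::
  "('a::field_char_0 poly \<Rightarrow> 'a poly) \<Rightarrow> (nat \<Rightarrow> 'a) \<Rightarrow> (nat \<Rightarrow> 'a poly) \<Rightarrow> bool" where
  "goncarov_basis d z t \<longleftrightarrow>
     (\<forall>n. degree (t n) = n) \<and>
     (\<forall>i n. poly ((d ^^ i) (t n)) (z i) = (if i = n then fact n else 0))"

definition ordered_partitions :: "nat \<Rightarrow> nat set list set" where
  "ordered_partitions n = {\<rho>. (\<forall>B\<in>set \<rho>. B \<noteq> {}) \<and>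
      (\<forall>i<length \<rho>. \<forall>j<length \<rho>. i \<noteq> j \<longrightarrow> \<rho> ! i \<inter> \<rho> ! j = {}) \<and>
      \<Union> (set \<rho>) = {1..n}}"

text \<open>Partial sums s_i = b_1 + ... + b_i (s_0 = 0), with b_{j+1} = card (\<rho> ! j).\<close>
definition part_sum :: "nat set list \<Rightarrow> nat \<Rightarrow> nat" where
  "part_sum \<rho> i = (\<Sum>j<i. card (\<rho> ! j))"

end

theory Submission
  imports Defs
begin


definition OP :: "'b set \<Rightarrow> 'b set list set" where
  "OP S = {\<rho>. (\<forall>B\<in>set \<rho>. B \<noteq> {}) \<and>
      (\<forall>i<length \<rho>. \<forall>j<length \<rho>. i \<noteq> j \<longrightarrow> \<rho> ! i \<inter> \<rho> ! j = {}) \<and>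
      \<Union> (set \<rho>) = S}"

lemma OP_empty: "OP {} = {[]}"
  unfolding OP_def by auto

lemma OP_cons:
  assumes "S \<noteq> {}"
  shows "OP S = (\<lambda>(B,\<rho>). B # \<rho>) ` (SIGMA B:Pow S - {{}}. OP (S - B))"
proof
  show "OP S \<subseteq> (\<lambda>(B,\<rho>). B # \<rho>) ` (SIGMA B:Pow S - {{}}. OP (S - B))"
  proof
    fix \<rho> assume r: "\<rho> \<in> OP S"
    then have "\<rho> \<noteq> []" using assms unfolding OP_def by auto
    then obtain B \<rho>' where eq: "\<rho> = B # \<rho>'" by (cases \<rho>) auto
    have ne: "\<forall>C\<in>set (B#\<rho>'). C \<noteq> {}" and
      dis: "\<forall>i<length (B#\<rho>'). \<forall>j<length (B#\<rho>'). i \<noteq> j \<longrightarrow> (B#\<rho>') ! i \<inter> (B#\<rho>') ! j = {}"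
      and un: "\<Union> (set (B#\<rho>')) = S"
      using r eq unfolding OP_def by auto
    have dis2: "\<forall>i<length \<rho>'. \<forall>j<length \<rho>'. i \<noteq> j \<longrightarrow> \<rho>' ! i \<inter> \<rho>' ! j = {}"
    proof (intro allI impI)
      fix i j assume "i < length \<rho>'" "j < length \<rho>'" "i \<noteq> j"
      then show "\<rho>' ! i \<inter> \<rho>' ! j = {}" using dis[rule_format, of "Suc i" "Suc j"] by simp
    qed
    have dB: "B \<inter> \<rho>' ! j = {}" if "j < length \<rho>'" for j
      using dis[rule_format, of 0 "Suc j"] that by simp
    have "\<Union> (set \<rho>') = S - B"
    proof
      show "\<Union> (set \<rho>') \<subseteq> S - B"
      proof
        fix x assume "x \<in> \<Union> (set \<rho>')"
        then obtain j where j: "j < length \<rho>'" "x \<in> \<rho>' ! j" by (auto simp: set_conv_nth)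
        then show "x \<in> S - B" using dB[OF j(1)] un nth_mem[OF j(1)] by auto
      qed
      show "S - B \<subseteq> \<Union> (set \<rho>')" using un by auto
    qed
    then have "\<rho>' \<in> OP (S - B)" using ne dis2 unfolding OP_def by auto
    moreover have "B \<in> Pow S - {{}}" using ne un by auto
    ultimately show "\<rho> \<in> (\<lambda>(B,\<rho>). B # \<rho>) ` (SIGMA B:Pow S - {{}}. OP (S - B))"
      unfolding eq by (intro image_eqI[where x="(B,\<rho>')"]) auto
  qed
next
  show "(\<lambda>(B,\<rho>). B # \<rho>) ` (SIGMA B:Pow S - {{}}. OP (S - B)) \<subseteq> OP S"
  proof
    fix x assume "x \<in> (\<lambda>(B,\<rho>). B # \<rho>) ` (SIGMA B:Pow S - {{}}. OP (S - B))"
    then obtain B \<rho> where x: "x = B # \<rho>" and B: "B \<subseteq> S" "B \<noteq> {}" and r: "\<rho> \<in> OP (S - B)"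
      by auto
    have ne: "\<forall>C\<in>set \<rho>. C \<noteq> {}" and
      dis: "\<forall>i<length \<rho>. \<forall>j<length \<rho>. i \<noteq> j \<longrightarrow> \<rho> ! i \<inter> \<rho> ! j = {}"
      and un: "\<Union> (set \<rho>) = S - B"
      using r unfolding OP_def by auto
    have dB: "B \<inter> \<rho> ! j = {}" "\<rho> ! j \<inter> B = {}" if "j < length \<rho>" for j
      using that un nth_mem[OF that] by blast+
    have "\<forall>i<length (B#\<rho>). \<forall>j<length (B#\<rho>). i \<noteq> j \<longrightarrow> (B#\<rho>) ! i \<inter> (B#\<rho>) ! j = {}"
    proof (intro allI impI)
      fix i j assume "i < length (B#\<rho>)" "j < length (B#\<rho>)" "i \<noteq> j"
      then show "(B#\<rho>) ! i \<inter> (B#\<rho>) ! j = {}"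
        using dis dB by (cases i; cases j) auto
    qed
    then show "x \<in> OP S" unfolding x using ne un B unfolding OP_def by auto
  qed
qed

lemma OP_finite: "finite S \<Longrightarrow> finite (OP S)"
proof (induction "card S" arbitrary: S rule: less_induct)
  case less
  show ?case
  proof (cases "S = {}")
    case True then show ?thesis by (simp add: OP_empty)
  next
    case False
    have "finite (SIGMA B:Pow S - {{}}. OP (S - B))"
    proof (rule finite_SigmaI)
      show "finite (Pow S - {{}})" using less.prems by simp
      fix B assume "B \<in> Pow S - {{}}"
      then have "card (S - B) < card S" using less.prems
        by (intro psubset_card_mono) auto
      then show "finite (OP (S - B))" using less less.prems by simp
    qed
    then show ?thesis by (simp add: OP_cons[OF False])
  qed
qed

definition FF :: "(nat \<Rightarrow> 'a::comm_ring_1 poly) \<Rightarrow> (nat \<Rightarrow> 'a) \<Rightarrow> nat set \<Rightarrow> nat \<Rightarrow> 'a" where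
  "FF p z S i = (\<Sum>\<rho>\<in>OP S. (-1) ^ length \<rho> *
       (\<Prod>j<length \<rho>. poly (p (card (\<rho> ! j))) (z (i + part_sum \<rho> j))))"

lemma FF_empty: "FF p z {} i = 1"
  by (simp add: FF_def OP_empty)

lemma part_sum_Cons: "part_sum (B # \<rho>) (Suc j) = card B + part_sum \<rho> j"
  unfolding part_sum_def by (subst sum.lessThan_Suc_shift) simp

lemma FF_rec:
  assumes "finite S" "S \<noteq> {}"
  shows "FF p z S i = - (\<Sum>B\<in>Pow S - {{}}. poly (p (card B)) (z i) * FF p z (S - B) (i + card B))"
proof -
  have inj: "inj_on (\<lambda>(B,\<rho>). B # \<rho>) (SIGMA B:Pow S - {{}}. OP (S - B))"
    by (auto simp: inj_on_def)
  have fin: "finite (OP (S - B))" for B using assms OP_finite by auto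
  have "FF p z S i = (\<Sum>(B,\<rho>)\<in>(SIGMA B:Pow S - {{}}. OP (S - B)). (-1) ^ length (B#\<rho>) *
       (\<Prod>j<length (B#\<rho>). poly (p (card ((B#\<rho>) ! j))) (z (i + part_sum (B#\<rho>) j))))"
    unfolding FF_def OP_cons[OF assms(2)] by (subst sum.reindex[OF inj]) (simp add: case_prod_unfold)
  also have "\<dots> = (\<Sum>B\<in>Pow S - {{}}. \<Sum>\<rho>\<in>OP (S - B). (-1) ^ length (B#\<rho>) *
       (\<Prod>j<length (B#\<rho>). poly (p (card ((B#\<rho>) ! j))) (z (i + part_sum (B#\<rho>) j))))"
    by (rule sum.Sigma[symmetric]) (use assms fin in auto)
  also have "\<dots> = (\<Sum>B\<in>Pow S - {{}}. - (poly (p (card B)) (z i) * FF p z (S - B) (i + card B)))"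
  proof (rule sum.cong[OF refl])
    fix B
    show "(\<Sum>\<rho>\<in>OP (S - B). (-1) ^ length (B#\<rho>) *
       (\<Prod>j<length (B#\<rho>). poly (p (card ((B#\<rho>) ! j))) (z (i + part_sum (B#\<rho>) j)))) =
       - (poly (p (card B)) (z i) * FF p z (S - B) (i + card B))"
      unfolding FF_def sum_distrib_left sum_negf[symmetric]
      by (rule sum.cong[OF refl])
         (simp only: length_Cons prod.lessThan_Suc_shift part_sum_Cons, simp add: part_sum_def add.assoc)
  qed
  finally show ?thesis by (simp add: sum_negf)
qed



lemma d_zero: assumes "delta_operator d" shows "d 0 = 0"
proof -
  have "d (0 + 0) = d 0 + d 0" using assms unfolding delta_operator_def by blast
  then show ?thesis by simp
qed

lemma dpow_add: assumes "delta_operator d" shows "(d ^^ i) (f + g) = (d ^^ i) f + (d ^^ i) g"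
  using assms by (induction i) (auto simp: delta_operator_def)

lemma dpow_smult: assumes "delta_operator d" shows "(d ^^ i) (smult c f) = smult c ((d ^^ i) f)"
  using assms by (induction i) (auto simp: delta_operator_def)

lemma dpow_zero: assumes "delta_operator d" shows "(d ^^ i) 0 = 0"
  by (induction i) (simp_all add: d_zero[OF assms])

lemma dpow_sum: assumes "delta_operator d"
  shows "(d ^^ i) (\<Sum>k\<in>A. f k) = (\<Sum>k\<in>A. (d ^^ i) (f k))"
proof (cases "finite A")
  case True then show ?thesis
    by (induction A rule: finite_induct) (auto simp: dpow_zero[OF assms] dpow_add[OF assms])
next
  case False then show ?thesis by (simp add: dpow_zero[OF assms])
qed

lemma dpow_p:
  assumes d: "delta_operator d" and bs: "basic_sequence d p"
  shows "(d ^^ i) (p k) = (if i \<le> k then smult (fact k / fact (k - i)) (p (k - i)) else 0)"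
proof (induction i)
  case 0 then show ?case by simp
next
  case (Suc i)
  have lin: "d (smult c f) = smult c (d f)" for c f using d unfolding delta_operator_def by blast
  have p0: "d (p 0) = 0" and pS: "\<And>n. d (p (Suc n)) = smult (of_nat (Suc n)) (p n)"
    using bs unfolding basic_sequence_def by auto
  show ?case
  proof (cases "Suc i \<le> k")
    case True
    then obtain m where m: "k - i = Suc m" "k - Suc i = m" by (metis Suc_diff_Suc Suc_le_lessD diff_Suc_Suc)
    have ih: "(d ^^ i) (p k) = smult (fact k / fact (Suc m)) (p (Suc m))"
      using Suc.IH True m(1) by simp
    have e: "(fact k / fact (Suc m) :: 'a) * of_nat (Suc m) = fact k / fact m"
      by (simp add: divide_simps del: of_nat_Suc)
    have "(d ^^ Suc i) (p k) = d ((d ^^ i) (p k))" by simp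
    also have "\<dots> = smult (fact k / fact (Suc m) * of_nat (Suc m)) (p m)"
      by (simp only: ih lin pS smult_smult)
    also have "\<dots> = smult (fact k / fact m) (p m)" by (simp only: e)
    finally show ?thesis using True m(2) by simp
  next
    case False
    show ?thesis
    proof (cases "i = k")
      case True then show ?thesis using Suc by (simp add: lin p0)
    next
      case False
      then show ?thesis using Suc \<open>\<not> Suc i \<le> k\<close> by (simp add: d_zero[OF d])
    qed
  qed
qed

lemma expand:
  assumes bs: "basic_sequence d p"
  shows "degree f \<le> m \<Longrightarrow> \<exists>a. f = (\<Sum>k\<le>m. smult (a k) (p k))"
proof (induction m arbitrary: f)
  case 0
  have p0: "p 0 = 1" using bs unfolding basic_sequence_def by auto
  have "f = [:coeff f 0:]" using 0 by (metis degree_0_id le_0_eq)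
  then show ?case by (intro exI[of _ "\<lambda>_. coeff f 0"]) (simp add: p0)
next
  case (Suc m)
  have dp: "degree (p (Suc m)) = Suc m" using bs unfolding basic_sequence_def by auto
  then have lc: "coeff (p (Suc m)) (Suc m) \<noteq> 0"
    by (metis leading_coeff_0_iff nat.distinct(1) degree_0)
  define c where "c = coeff f (Suc m) / coeff (p (Suc m)) (Suc m)"
  define g where "g = f - smult c (p (Suc m))"
  have "degree g \<le> m"
  proof (rule degree_le, intro allI impI)
    fix i assume "m < i"
    show "coeff g i = 0"
    proof (cases "i = Suc m")
      case True then show ?thesis using lc by (simp add: g_def c_def)
    next
      case False
      then have "i > Suc m" using \<open>m < i\<close> by simp
      then show ?thesis using Suc.prems dp by (simp add: g_def coeff_eq_0)
    qed
  qed
  then obtain a where a: "g = (\<Sum>k\<le>m. smult (a k) (p k))" using Suc.IH by blast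
  have "f = (\<Sum>k\<le>m. smult ((a(Suc m := c)) k) (p k)) + smult ((a(Suc m := c)) (Suc m)) (p (Suc m))"
  proof -
    have "f = g + smult c (p (Suc m))" by (simp add: g_def)
    then show ?thesis using a by simp
  qed
  then show ?case by (intro exI[of _ "a(Suc m := c)"]) (simp add: sum.atMost_Suc)
qed



lemma sum_Pow_card:
  assumes "finite S"
  shows "(\<Sum>B\<in>Pow S. h (card B)) = (\<Sum>b\<le>card S. of_nat (card S choose b) * (h b :: 'a::comm_ring_1))"
proof -
  have "(\<Sum>B\<in>Pow S. h (card B)) = (\<Sum>b\<le>card S. \<Sum>B\<in>{B. B \<in> Pow S \<and> card B = b}. h (card B))"
    by (rule sum.group[symmetric]) (use assms in \<open>auto intro: card_mono\<close>)
  also have "\<dots> = (\<Sum>b\<le>card S. of_nat (card S choose b) * h b)"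
  proof (rule sum.cong[OF refl])
    fix b
    have "(\<Sum>B\<in>{B. B \<in> Pow S \<and> card B = b}. h (card B)) = (\<Sum>B\<in>{B. B \<subseteq> S \<and> card B = b}. h b)"
      by (rule sum.cong) auto
    also have "\<dots> = of_nat (card S choose b) * h b" using n_subsets[OF assms, of b] by simp
    finally show "(\<Sum>B\<in>{B. B \<in> Pow S \<and> card B = b}. h (card B)) = of_nat (card S choose b) * h b" .
  qed
  finally show ?thesis .
qed

lemma aux_neg: "(x::'a::ab_group_add) + y = 0 \<Longrightarrow> - y = x"
  by (metis add.commute neg_eq_iff_add_eq_0)

lemma choose_identity:
  assumes "c \<le> m"
  shows "((i + m) choose i) * fact i * ((m choose c) * fact c) = ((i + m) choose (i + c)) * fact (i + c)"
proof -
  have e1: "fact i * fact m * ((i + m) choose i) = fact (i + m)"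
    using binomial_fact_lemma[of i "i + m"] by simp
  have e2: "fact c * fact (m - c) * (m choose c) = fact m"
    using binomial_fact_lemma[of c m] assms by simp
  have e3: "fact (i + c) * fact (m - c) * ((i + m) choose (i + c)) = fact (i + m)"
    using binomial_fact_lemma[of "i + c" "i + m"] assms by simp
  have "((i + m) choose i) * fact i * ((m choose c) * fact c) * fact (m - c)
      = ((i + m) choose i) * fact i * (fact c * fact (m - c) * (m choose c))" by (simp add: ac_simps)
  also have "\<dots> = fact (i + m)" using e1 e2 by (simp add: ac_simps)
  also have "\<dots> = ((i + m) choose (i + c)) * fact (i + c) * fact (m - c)" using e3 by (simp add: ac_simps)
  finally show ?thesis by simp
qed



theorem mainTheorem15:
  fixes d :: "'a::field_char_0 poly \<Rightarrow> 'a poly"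
    and z :: "nat \<Rightarrow> 'a" and p t :: "nat \<Rightarrow> 'a poly" and n :: nat
  assumes "delta_operator d"
    and "basic_sequence d p"
    and "goncarov_basis d z t"
    and "n \<ge> 1"
  shows "poly (t n) 0 =
    (\<Sum>\<rho>\<in>ordered_partitions n. (-1) ^ length \<rho> *
       (\<Prod>i<length \<rho>. poly (p (card (\<rho> ! i))) (z (part_sum \<rho> i))))"
proof -
  note d = assms(1) and bs = assms(2) and gb = assms(3)
  have degt: "degree (t n) = n"
    and cond: "\<And>i. poly ((d ^^ i) (t n)) (z i) = (if i = n then fact n else 0)"
    using gb unfolding goncarov_basis_def by auto
  obtain a where a: "t n = (\<Sum>k\<le>n. smult (a k) (p k))"
    using expand[OF bs, of "t n" n] degt by auto
  have p0: "p 0 = 1" and pz: "\<And>k. k \<ge> 1 \<Longrightarrow> poly (p k) 0 = 0"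
    using bs unfolding basic_sequence_def by auto
  have ev: "poly ((d ^^ i) (t n)) (z i) =
      (\<Sum>b\<le>n - i. a (i + b) * (fact (i + b) / fact b) * poly (p b) (z i))" if "i \<le> n" for i
  proof -
    have "poly ((d ^^ i) (t n)) (z i) = (\<Sum>k\<le>n. a k * (if i \<le> k then fact k / fact (k - i) * poly (p (k - i)) (z i) else 0))"
      unfolding a dpow_sum[OF d] dpow_smult[OF d] dpow_p[OF d bs] poly_sum by (rule sum.cong) auto
    also have "\<dots> = (\<Sum>k\<in>{i..n}. a k * (fact k / fact (k - i) * poly (p (k - i)) (z i)))"
      by (rule sum.mono_neutral_cong_right) auto
    also have "\<dots> = (\<Sum>b\<le>n - i. a (i + b) * (fact (i + b) / fact b) * poly (p b) (z i))"
    proof -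
      have "{i..n} = (\<lambda>b. i + b) ` {..n - i}"
      proof (intro equalityI subsetI)
        fix x assume "x \<in> {i..n}"
        then have "x = i + (x - i)" "x - i \<in> {..n - i}" by auto
        then show "x \<in> (\<lambda>b. i + b) ` {..n - i}" by blast
      qed (use that in auto)
      then show ?thesis by (simp add: sum.reindex mult.assoc)
    qed
    finally show ?thesis .
  qed
  have key: "\<forall>i (S::nat set). i + m = n \<longrightarrow> finite S \<longrightarrow> card S = m \<longrightarrow> a i = of_nat (n choose i) * FF p z S i" for m
  proof (induction m rule: less_induct)
    case (less m)
    show ?case
    proof (intro allI impI)
      fix i and S :: "nat set" assume im: "i + m = n" and fS: "finite S" and cS: "card S = m"
      have iln: "i \<le> n" using im by simp
      have nim: "n - i = m" using im by simp
      have C: "(\<Sum>b\<le>m. a (i + b) * (fact (i + b) / fact b) * poly (p b) (z i)) = (if m = 0 then fact n else 0)"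
        using ev[OF iln] cond[of i] im nim by auto
      show "a i = of_nat (n choose i) * FF p z S i"
      proof (cases m)
        case 0
        then have "S = {}" using cS fS by simp
        with 0 C im show ?thesis by (simp add: FF_empty p0)
      next
        case (Suc m')
        then have Sne: "S \<noteq> {}" using cS by auto
        have IH: "FF p z (S - B) (i + card B) = a (i + card B) / of_nat (n choose (i + card B))"
          if "B \<in> Pow S - {{}}" for B
        proof -
          have Bs: "B \<subseteq> S" "B \<noteq> {}" using that by auto
          have fB: "finite B" using Bs fS finite_subset by auto
          have cB: "card B \<le> m" "card B > 0" using Bs fS cS fB card_mono by (auto simp: card_gt_0_iff)
          have cSB: "card (S - B) = m - card B" using Bs fS cS fB by (simp add: card_Diff_subset)
          have "m - card B < m" using cB by simp
          from less[OF this, rule_format, of "i + card B" "S - B"]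
          have "a (i + card B) = of_nat (n choose (i + card B)) * FF p z (S - B) (i + card B)"
            using im cB fS cSB by simp
          moreover have "(n choose (i + card B)) \<noteq> 0" using im cB by simp
          ultimately show ?thesis by (simp add: field_simps)
        qed
        define h where "h b = (if b = 0 then 0 else poly (p b) (z i) * (a (i + b) / of_nat (n choose (i + b))))" for b
        have FFS: "FF p z S i = - (\<Sum>b\<le>m'. of_nat (m choose Suc b) * h (Suc b))"
        proof -
          have "FF p z S i = - (\<Sum>B\<in>Pow S - {{}}. h (card B))"
            unfolding FF_rec[OF fS Sne]
          proof (intro arg_cong[where f=uminus] sum.cong refl)
            fix B assume B: "B \<in> Pow S - {{}}"
            then have "card B \<noteq> 0" using fS finite_subset by (auto simp: card_eq_0_iff)
            then show "poly (p (card B)) (z i) * FF p z (S - B) (i + card B) = h (card B)"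
              using IH[OF B] by (simp add: h_def)
          qed
          also have "(\<Sum>B\<in>Pow S - {{}}. h (card B)) = (\<Sum>B\<in>Pow S. h (card B))"
            by (rule sum.mono_neutral_left) (auto simp: h_def fS)
          also have "\<dots> = (\<Sum>b\<le>m. of_nat (m choose b) * h b)" using sum_Pow_card[OF fS] cS by simp
          also have "\<dots> = (\<Sum>b\<le>m'. of_nat (m choose Suc b) * h (Suc b))"
            unfolding Suc sum.atMost_Suc_shift by (simp add: h_def)
          finally show ?thesis .
        qed
        have C0: "a i * fact i + (\<Sum>b\<le>m'. a (i + Suc b) * (fact (i + Suc b) / fact (Suc b)) * poly (p (Suc b)) (z i)) = 0"
          using C unfolding Suc sum.atMost_Suc_shift by (simp add: p0)
        have coef: "of_nat (n choose i) * fact i * (of_nat (m choose Suc b) / of_nat (n choose (i + Suc b)))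
             = (fact (i + Suc b) / fact (Suc b) :: 'a)" if "b \<le> m'" for b
        proof -
          have cm: "Suc b \<le> m" using that Suc by simp
          have nat: "(n choose i) * fact i * ((m choose Suc b) * fact (Suc b)) = (n choose (i + Suc b)) * fact (i + Suc b)"
            using choose_identity[OF cm, of i] im by simp
          have "(of_nat ((n choose i) * fact i * ((m choose Suc b) * fact (Suc b))) :: 'a)
               = of_nat ((n choose (i + Suc b)) * fact (i + Suc b))" using nat by simp
          then have eq: "(of_nat (n choose i) * fact i * (of_nat (m choose Suc b) * fact (Suc b)) :: 'a)
               = of_nat (n choose (i + Suc b)) * fact (i + Suc b)"
            by (simp only: of_nat_mult of_nat_fact)
          have nz: "(of_nat (n choose (i + Suc b)) :: 'a) \<noteq> 0" using cm im by simp
          have nz2: "(fact (Suc b) :: 'a) \<noteq> 0" by (rule fact_nonzero)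
          show ?thesis using eq nz nz2 by (simp add: divide_simps mult_ac)
        qed
        have "of_nat (n choose i) * FF p z S i * fact i =
            - (\<Sum>b\<le>m'. (of_nat (n choose i) * fact i * (of_nat (m choose Suc b) / of_nat (n choose (i + Suc b))))
                 * (a (i + Suc b) * poly (p (Suc b)) (z i)))"
          unfolding FFS by (simp add: sum_distrib_left sum_distrib_right h_def mult_ac)
        also have "\<dots> = - (\<Sum>b\<le>m'. a (i + Suc b) * (fact (i + Suc b) / fact (Suc b)) * poly (p (Suc b)) (z i))"
        proof (intro arg_cong[where f=uminus] sum.cong refl)
          fix b assume "b \<in> {..m'}"
          then have bm: "b \<le> m'" by simp
          show "(of_nat (n choose i) * fact i * (of_nat (m choose Suc b) / of_nat (n choose (i + Suc b))))
                 * (a (i + Suc b) * poly (p (Suc b)) (z i)) =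
                a (i + Suc b) * (fact (i + Suc b) / fact (Suc b)) * poly (p (Suc b)) (z i)"
            by (subst coef[OF bm]) (simp only: mult_ac)
        qed
        also have "\<dots> = a i * fact i" by (rule aux_neg[OF C0])
        finally show ?thesis by simp
      qed
    qed
  qed
  have a0: "a 0 = FF p z {1..n} 0" using key[of n, rule_format, of 0 "{1..n}"] by simp
  have "poly (t n) 0 = a 0"
    unfolding a poly_sum by (simp add: sum.atMost_shift p0 pz)
  also have "\<dots> = (\<Sum>\<rho>\<in>ordered_partitions n. (-1) ^ length \<rho> *
       (\<Prod>i<length \<rho>. poly (p (card (\<rho> ! i))) (z (part_sum \<rho> i))))"
    unfolding a0 FF_def ordered_partitions_def OP_def by simp
  finally show ?thesis .
qed


end
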